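(* Let $a\in\mathcal{A}$ have a $w$-weighted generalized core-EP inverse and $b\in \mathcal{A}$. Then the following are equivalent: (1) $(1-wawa^{\mathrm{gcEP},w})b=0$. (2) $(1-wa^{\mathrm{gcEP},w}wa)b=0$. (3) $(wa)^{\pi}b=0$.
   Context: $\mathcal{A}$ is a complex Banach *-algebra with identity and $w\in\mathcal{A}$. The $w$-weighted generalized core-EP inverse of $a$ is the unique $x$ with $a(wx)^2=x$, $(wawx)^*=wawx$, $\lim_{n\to\infty}\|(aw)^n-(xw)(aw)^{n+1}\|^{1/n}=0$, denoted $a^{\mathrm{gcEP},w}$. $(wa)^{\pi}=1-wa(wa)^d$, with $(wa)^d$ the generalized Drazin inverse of $wa$. *)

theory Defs
  imports "HOL-Analysis.Analysis"
begin

class cbanach_star_algebra = real_normed_algebra_1 + banach +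
  fixes scaleC :: "complex \<Rightarrow> 'a \<Rightarrow> 'a"
    and invol :: "'a \<Rightarrow> 'a"
  assumes scaleC_add_right: "scaleC c (x + y) = scaleC c x + scaleC c y"
    and scaleC_add_left: "scaleC (c + d) x = scaleC c x + scaleC d x"
    and scaleC_scaleC: "scaleC c (scaleC d x) = scaleC (c * d) x"
    and scaleC_one: "scaleC 1 x = x"
    and scaleC_of_real: "scaleC (complex_of_real r) x = scaleR r x"
    and norm_scaleC: "norm (scaleC c x) = cmod c * norm x"
    and scaleC_mult_left: "scaleC c x * y = scaleC c (x * y)"
    and scaleC_mult_right: "x * scaleC c y = scaleC c (x * y)"
    and invol_invol: "invol (invol x) = x"
    and invol_add: "invol (x + y) = invol x + invol y"
    and invol_mult: "invol (x * y) = invol y * invol x"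
    and invol_scaleC: "invol (scaleC c x) = scaleC (cnj c) (invol x)"

definition invertible_el :: "'a::cbanach_star_algebra \<Rightarrow> bool" where
  "invertible_el z \<longleftrightarrow> (\<exists>y. y * z = 1 \<and> z * y = 1)"

definition quasinilpotent :: "'a::cbanach_star_algebra \<Rightarrow> bool" where
  "quasinilpotent q \<longleftrightarrow> (\<forall>l::complex. l \<noteq> 0 \<longrightarrow> invertible_el (scaleC l 1 - q))"

definition is_gdrazin :: "'a::cbanach_star_algebra \<Rightarrow> 'a \<Rightarrow> bool" where
  "is_gdrazin a x \<longleftrightarrow> x * a * x = x \<and> a * x = x * a \<and> quasinilpotent (a - a * a * x)"

definition gdrazin :: "'a::cbanach_star_algebra \<Rightarrow> 'a" where
  "gdrazin a = (THE x. is_gdrazin a x)"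

definition spectral_idem :: "'a::cbanach_star_algebra \<Rightarrow> 'a" where
  "spectral_idem a = 1 - a * gdrazin a"

definition is_wgcEP :: "'a::cbanach_star_algebra \<Rightarrow> 'a \<Rightarrow> 'a \<Rightarrow> bool" where
  "is_wgcEP a w x \<longleftrightarrow>
     a * (w * x) ^ 2 = x \<and>
     invol (w * a * w * x) = w * a * w * x \<and>
     (\<lambda>n. root n (norm ((a * w) ^ n - (x * w) * (a * w) ^ (Suc n)))) \<longlonglongrightarrow> 0"

definition wgcEP :: "'a::cbanach_star_algebra \<Rightarrow> 'a \<Rightarrow> 'a" where
  "wgcEP a w = (THE x. is_wgcEP a w x)"

end

theory Submission
  imports Defs
begin


lemma scaleC_zero_left [simp]: "scaleC 0 (x::'a::cbanach_star_algebra) = 0"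
  using scaleC_of_real[of 0 x] by simp

lemma scaleC_diff_left: "scaleC (c - d) (x::'a::cbanach_star_algebra) = scaleC c x - scaleC d x"
  using scaleC_add_left[of "c - d" d x] by (simp add: algebra_simps)

lemma scaleC_minus_left: "scaleC (- c) (x::'a::cbanach_star_algebra) = - scaleC c x"
  using scaleC_diff_left[of 0 c x] by simp

lemma scaleC_zero_right [simp]: "scaleC c (0::'a::cbanach_star_algebra) = 0"
  using scaleC_add_right[of c 0 0] by simp

lemma scaleC_diff_right: "scaleC c ((x::'a::cbanach_star_algebra) - y) = scaleC c x - scaleC c y"
  using scaleC_add_right[of c "x - y" y] by (simp add: algebra_simps)

lemma scaleC_sum_left: "scaleC (\<Sum>k\<in>A. f k) (x::'a::cbanach_star_algebra) = (\<Sum>k\<in>A. scaleC (f k) x)"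
  by (induction A rule: infinite_finite_induct) (auto simp: scaleC_add_left)

lemma scaleC_sum_right: "scaleC c (\<Sum>k\<in>A. (f k::'a::cbanach_star_algebra)) = (\<Sum>k\<in>A. scaleC c (f k))"
  by (induction A rule: infinite_finite_induct) (auto simp: scaleC_add_right)

lemma scaleC_power: "(scaleC c (x::'a::cbanach_star_algebra)) ^ n = scaleC (c ^ n) (x ^ n)"
proof (induction n)
  case 0 then show ?case by (simp add: scaleC_one)
next
  case (Suc n)
  then show ?case
    by (simp add: scaleC_mult_left scaleC_mult_right scaleC_scaleC mult.commute)
qed

lemma scaleC_of_nat: "scaleC (of_nat n) (x::'a::cbanach_star_algebra) = of_nat n * x"
  using scaleC_of_real[of "real n" x] by (simp add: scaleR_conv_of_real)

lemma scaleC_one_mult: "scaleC c 1 * (x::'a::cbanach_star_algebra) = scaleC c x"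
  by (simp add: scaleC_mult_left)

lemma mult_scaleC_one: "(x::'a::cbanach_star_algebra) * scaleC c 1 = scaleC c x"
  by (simp add: scaleC_mult_right)


section \<open>Root decay\<close>

definition decK :: "(nat \<Rightarrow> 'a::real_normed_vector) \<Rightarrow> bool" where
  "decK h \<longleftrightarrow> (\<forall>\<epsilon>>0. \<exists>K N. \<forall>n\<ge>N. norm (h n) \<le> K * \<epsilon> ^ n)"

lemma decK_D:
  assumes "decK h" "\<epsilon> > 0"
  obtains K N where "\<And>n. n \<ge> N \<Longrightarrow> norm (h n) \<le> K * \<epsilon> ^ n"
proof -
  have "\<exists>K N. \<forall>n\<ge>N. norm (h n) \<le> K * \<epsilon> ^ n" using assms unfolding decK_def by simp
  then obtain K N where "\<forall>n\<ge>N. norm (h n) \<le> K * \<epsilon> ^ n" by (elim exE)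
  then show ?thesis by (intro that[of N K]) auto
qed

lemma decK_geom:
  assumes "decK h" "B \<ge> 0"
  shows "\<exists>K N. \<forall>n\<ge>N. B ^ n * norm (h n) \<le> K * (1/2) ^ n"
proof -
  define \<epsilon> where "\<epsilon> = 1 / (2 * (B + 1))"
  have ep: "\<epsilon> > 0" using assms(2) by (simp add: \<epsilon>_def)
  obtain K N where KN: "\<And>n. n \<ge> N \<Longrightarrow> norm (h n) \<le> K * \<epsilon> ^ n"
    using decK_D[OF assms(1) ep] by metis
  have Be: "B * \<epsilon> \<le> 1/2" "B * \<epsilon> \<ge> 0" using assms(2) ep by (auto simp: \<epsilon>_def field_simps)
  have "B ^ n * norm (h n) \<le> \<bar>K\<bar> * (1/2) ^ n" if "n \<ge> N" for n
  proof -
    have "B ^ n * norm (h n) \<le> B ^ n * (K * \<epsilon> ^ n)"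
      using KN[OF that] assms(2) by (simp add: mult_left_mono)
    also have "\<dots> = K * (B * \<epsilon>) ^ n" by (simp add: power_mult_distrib)
    also have "\<dots> \<le> \<bar>K\<bar> * (B * \<epsilon>) ^ n" using Be by (simp add: mult_right_mono)
    also have "\<dots> \<le> \<bar>K\<bar> * (1/2) ^ n"
      using Be by (intro mult_left_mono power_mono) auto
    finally show ?thesis .
  qed
  then show ?thesis by blast
qed

lemma le_geom_half_imp_nonpos:
  fixes x :: real
  assumes "\<And>n. n \<ge> N \<Longrightarrow> x \<le> K * (1/2) ^ n"
  shows "x \<le> 0"
proof -
  have "(\<lambda>n. (1/2::real) ^ n) \<longlonglongrightarrow> 0"
    by (rule LIMSEQ_power_zero) simp
  then have "(\<lambda>n. K * (1/2::real) ^ n) \<longlonglongrightarrow> K * 0"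
    by (rule tendsto_mult[OF tendsto_const])
  moreover have "\<exists>N. \<forall>n\<ge>N. x \<le> K * (1/2) ^ n" using assms by blast
  ultimately have "x \<le> K * 0" by (rule LIMSEQ_le_const)
  then show ?thesis by simp
qed

lemma decK_kill:
  assumes "decK h" "B \<ge> 0" "D \<ge> 0"
    and "\<And>n. n \<ge> N0 \<Longrightarrow> norm v \<le> norm (h n) * B ^ n * D"
  shows "v = 0"
proof -
  obtain K N where KN: "\<And>n. n \<ge> N \<Longrightarrow> B ^ n * norm (h n) \<le> K * (1/2) ^ n"
    using decK_geom[OF assms(1,2)] by blast
  have "norm v \<le> (K * D) * (1/2) ^ n" if "n \<ge> max N N0" for n
  proof -
    have "norm v \<le> (B ^ n * norm (h n)) * D" using assms(4)[of n] that by (simp add: algebra_simps)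
    also have "\<dots> \<le> (K * (1/2) ^ n) * D" using KN[of n] that assms(3) by (intro mult_right_mono) auto
    finally show ?thesis by (simp add: algebra_simps)
  qed
  then have "norm v \<le> 0" by (intro le_geom_half_imp_nonpos[of "max N N0"]) auto
  then show ?thesis by simp
qed

lemma decK_Suc:
  assumes "decK h" shows "decK (\<lambda>n. h (Suc n))"
  unfolding decK_def
proof (intro allI impI)
  fix \<epsilon> :: real assume ep: "\<epsilon> > 0"
  obtain K N where KN: "\<And>n. n \<ge> N \<Longrightarrow> norm (h n) \<le> K * \<epsilon> ^ n"
    using decK_D[OF assms(1) ep] by metis
  have "norm (h (Suc n)) \<le> (K * \<epsilon>) * \<epsilon> ^ n" if "n \<ge> N" for n
  proof -
    have "norm (h (Suc n)) \<le> K * \<epsilon> ^ (Suc n)" using KN[of "Suc n"] that by simp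
    also have "\<dots> = (K * \<epsilon>) * \<epsilon> ^ n" by (simp only: power_Suc mult.assoc)
    finally show ?thesis .
  qed
  then show "\<exists>K N. \<forall>n\<ge>N. norm (h (Suc n)) \<le> K * \<epsilon> ^ n"
    by (intro exI[of _ "K * \<epsilon>"] exI[of _ N]) simp
qed

lemma decK_unSuc: 
  assumes "decK (\<lambda>n. h (Suc n))" shows "decK h"
  unfolding decK_def
proof (intro allI impI)
  fix \<epsilon> :: real assume ep: "\<epsilon> > 0"
  obtain K N where KN: "\<And>n. n \<ge> N \<Longrightarrow> norm (h (Suc n)) \<le> K * \<epsilon> ^ n"
    using decK_D[OF assms(1) ep] by metis
  have "norm (h m) \<le> (K / \<epsilon>) * \<epsilon> ^ m" if "m \<ge> Suc N" for m
  proof -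
    define n where "n = m - 1"
    have m: "m = Suc n" using that by (simp add: n_def)
    have nN: "n \<ge> N" using that by (simp add: n_def)
    have "norm (h m) \<le> K * \<epsilon> ^ n" using KN[OF nN] by (simp add: m)
    also have "K * \<epsilon> ^ n = (K / \<epsilon>) * \<epsilon> ^ m"
      using ep by (simp add: m)
    finally show ?thesis .
  qed
  then show "\<exists>K N. \<forall>n\<ge>N. norm (h n) \<le> K * \<epsilon> ^ n"
    by (intro exI[of _ "K / \<epsilon>"] exI[of _ "Suc N"]) simp
qed

lemma decK_mono:
  assumes "decK h" "C \<ge> 0" "\<And>n. norm (k n) \<le> C * norm (h n)"
  shows "decK k"
  unfolding decK_def
proof (intro allI impI)
  fix \<epsilon> :: real assume ep: "\<epsilon> > 0"
  obtain K N where KN: "\<And>n. n \<ge> N \<Longrightarrow> norm (h n) \<le> K * \<epsilon> ^ n"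
    using decK_D[OF assms(1) ep] by metis
  have "norm (k n) \<le> (C * K) * \<epsilon> ^ n" if "n \<ge> N" for n
    using assms(3)[of n] mult_left_mono[OF KN[OF that] assms(2)] by (simp add: algebra_simps)
  then show "\<exists>K N. \<forall>n\<ge>N. norm (k n) \<le> K * \<epsilon> ^ n"
    by (intro exI[of _ "C * K"] exI[of _ N]) simp
qed

lemma decK_add:
  assumes "decK h" "decK k" "\<And>n. norm (l n) \<le> norm (h n) + norm (k n)"
  shows "decK l"
  unfolding decK_def
proof (intro allI impI)
  fix \<epsilon> :: real assume ep: "\<epsilon> > 0"
  obtain K N where KN: "\<And>n. n \<ge> N \<Longrightarrow> norm (h n) \<le> K * \<epsilon> ^ n"
    using decK_D[OF assms(1) ep] by metis
  obtain K' N' where KN': "\<And>n. n \<ge> N' \<Longrightarrow> norm (k n) \<le> K' * \<epsilon> ^ n"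
    using decK_D[OF assms(2) ep] by metis
  have "norm (l n) \<le> (K + K') * \<epsilon> ^ n" if "n \<ge> max N N'" for n
    using assms(3)[of n] KN[of n] KN'[of n] that by (simp add: algebra_simps)
  then show "\<exists>K N. \<forall>n\<ge>N. norm (l n) \<le> K * \<epsilon> ^ n"
    by (intro exI[of _ "K + K'"] exI[of _ "max N N'"]) simp
qed

lemma decK_root:
  assumes "(\<lambda>n. root n (norm (h n))) \<longlonglongrightarrow> 0"
  shows "decK h"
  unfolding decK_def
proof (intro allI impI)
  fix \<epsilon> :: real assume ep: "\<epsilon> > 0"
  then have "eventually (\<lambda>n. dist (root n (norm (h n))) 0 < \<epsilon>) sequentially"
    using assms tendstoD by blast
  then obtain N where N: "\<And>n. n \<ge> N \<Longrightarrow> \<bar>root n (norm (h n))\<bar> < \<epsilon>"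
    by (auto simp: eventually_sequentially dist_real_def)
  have "norm (h n) \<le> 1 * \<epsilon> ^ n" if "n \<ge> max N 1" for n
  proof -
    have n: "n > 0" using that by simp
    have "norm (h n) = root n (norm (h n)) ^ n" using n by simp
    also have "\<dots> \<le> \<epsilon> ^ n"
      using N[of n] that n by (intro power_mono) (auto simp: real_root_ge_zero)
    finally show ?thesis by simp
  qed
  then show "\<exists>K N. \<forall>n\<ge>N. norm (h n) \<le> K * \<epsilon> ^ n"
    by (intro exI[of _ 1] exI[of _ "max N 1"]) simp
qed

lemma decK_summable:
  fixes h :: "nat \<Rightarrow> 'a::banach"
  assumes "decK k" "B \<ge> 0" "\<And>n. norm (h n) \<le> B ^ n * norm (k n) * D" "D \<ge> 0"
  shows "summable h"
proof -
  obtain K N where KN: "\<And>n. n \<ge> N \<Longrightarrow> B ^ n * norm (k n) \<le> K * (1/2) ^ n"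
    using decK_geom[OF assms(1,2)] by blast
  have bnd: "norm (h n) \<le> (K * D) * (1/2) ^ n" if "n \<ge> N" for n
    using assms(3)[of n] mult_right_mono[OF KN[OF that] assms(4)] by (simp add: algebra_simps)
  have sg: "summable (\<lambda>n. (K * D) * (1/2::real) ^ n)"
  proof -
    have "summable (\<lambda>n. (1/2::real) ^ n)" by (rule summable_geometric) simp
    then show ?thesis by (rule summable_mult)
  qed
  show ?thesis by (rule summable_comparison_test'[OF sg bnd])
qed


section \<open>Gelfand-type lemma: quasinilpotent elements have decaying powers\<close>

lemma one_minus_geom:
  fixes x :: "'a::ring_1"
  shows "(1 - x) * (\<Sum>i<n. x ^ i) = 1 - x ^ n"
proof (induction n)
  case 0 then show ?case by simp
next
  case (Suc n)
  have "(1 - x) * (\<Sum>i<Suc n. x ^ i) = (1 - x) * (\<Sum>i<n. x ^ i) + (1 - x) * x ^ n"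
    by (simp add: distrib_left)
  also have "\<dots> = 1 - x ^ n + (x ^ n - x ^ Suc n)"
    using Suc by (simp add: algebra_simps power_Suc)
  finally show ?case by simp
qed

definition resolv :: "'a::cbanach_star_algebra \<Rightarrow> complex \<Rightarrow> 'a" where
  "resolv u \<mu> = (SOME r. r * (1 - scaleC \<mu> u) = 1 \<and> (1 - scaleC \<mu> u) * r = 1)"

lemma resolv:
  assumes "invertible_el (1 - scaleC \<mu> u)"
  shows "resolv u \<mu> * (1 - scaleC \<mu> u) = 1" "(1 - scaleC \<mu> u) * resolv u \<mu> = 1"
proof -
  have "\<exists>r. r * (1 - scaleC \<mu> u) = 1 \<and> (1 - scaleC \<mu> u) * r = 1"
    using assms unfolding invertible_el_def by blast
  from someI_ex[OF this] show "resolv u \<mu> * (1 - scaleC \<mu> u) = 1" "(1 - scaleC \<mu> u) * resolv u \<mu> = 1"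
    unfolding resolv_def by blast+
qed

lemma resolv_identity:
  fixes u :: "'a::cbanach_star_algebra"
  assumes "invertible_el (1 - scaleC \<mu> u)" "invertible_el (1 - scaleC \<nu> u)"
  shows "resolv u \<mu> - resolv u \<nu> = scaleC (\<mu> - \<nu>) (resolv u \<mu> * u * resolv u \<nu>)"
proof -
  let ?a = "resolv u \<mu>" and ?b = "resolv u \<nu>"
  have "?a - ?b = ?a * ((1 - scaleC \<nu> u) * ?b) - (?a * (1 - scaleC \<mu> u)) * ?b"
    using resolv[OF assms(1)] resolv[OF assms(2)] by simp
  also have "\<dots> = ?a * ((1 - scaleC \<nu> u) - (1 - scaleC \<mu> u)) * ?b"
    by (simp add: algebra_simps)
  also have "(1 - scaleC \<nu> u) - (1 - scaleC \<mu> u) = scaleC (\<mu> - \<nu>) u"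
    by (simp add: scaleC_diff_left)
  also have "?a * scaleC (\<mu> - \<nu>) u * ?b = scaleC (\<mu> - \<nu>) (?a * u * ?b)"
    by (simp add: scaleC_mult_left scaleC_mult_right)
  finally show ?thesis .
qed

lemma norm_mult3:
  fixes a b c :: "'a::real_normed_algebra"
  shows "norm (a * b * c) \<le> norm a * norm b * norm c"
proof -
  have "norm (a * b * c) \<le> norm (a * b) * norm c" by (rule norm_mult_ineq)
  also have "\<dots> \<le> norm a * norm b * norm c" by (intro mult_right_mono norm_mult_ineq norm_ge_zero)
  finally show ?thesis .
qed

lemma resolv_diff_norm:
  fixes u :: "'a::cbanach_star_algebra"
  assumes "invertible_el (1 - scaleC \<mu> u)" "invertible_el (1 - scaleC \<nu> u)"
  shows "norm (resolv u \<mu> - resolv u \<nu>) \<le> cmod (\<mu> - \<nu>) * (norm (resolv u \<mu>) * norm u * norm (resolv u \<nu>))"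
proof -
  have "norm (resolv u \<mu> - resolv u \<nu>) = cmod (\<mu> - \<nu>) * norm (resolv u \<mu> * u * resolv u \<nu>)"
    using resolv_identity[OF assms] by (simp add: norm_scaleC)
  also have "\<dots> \<le> cmod (\<mu> - \<nu>) * (norm (resolv u \<mu>) * norm u * norm (resolv u \<nu>))"
    by (intro mult_left_mono norm_mult3) auto
  finally show ?thesis .
qed

lemma resolv_isCont:
  fixes u :: "'a::cbanach_star_algebra"
  assumes inv: "\<And>\<mu>. invertible_el (1 - scaleC \<mu> u)"
  shows "isCont (resolv u) \<nu>"
  unfolding continuous_at_eps_delta
proof (intro allI impI)
  fix e :: real assume e: "e > 0"
  define a where "a = norm (resolv u \<nu>)"
  define b where "b = norm u"
  have a0: "a \<ge> 0" and b0: "b \<ge> 0" by (auto simp: a_def b_def)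
  define d where "d = min (1 / (2 * (a * b + 1))) (e / (2 * a * a * b + 1))"
  have ab0: "a * b \<ge> 0" "a * a * b \<ge> 0" using a0 b0 by auto
  have d0: "d > 0" using e ab0 by (auto simp: d_def)
  have "dist (resolv u x) (resolv u \<nu>) < e" if x: "dist x \<nu> < d" for x
  proof -
    define r where "r = cmod (x - \<nu>)"
    have r: "r < d" "r \<ge> 0" using x by (auto simp: r_def dist_norm)
    define R where "R = norm (resolv u x)"
    have R0: "R \<ge> 0" by (simp add: R_def)
    have diff: "norm (resolv u x - resolv u \<nu>) \<le> r * (R * b * a)"
      using resolv_diff_norm[OF inv inv, of x \<nu>] by (simp add: r_def R_def a_def b_def)
    have rab: "r * (a * b) \<le> 1/2"
    proof -
      have "r * (a * b) \<le> d * (a * b)" using r ab0 by (intro mult_right_mono) auto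
      also have "\<dots> \<le> (1 / (2 * (a * b + 1))) * (a * b)" using ab0 by (intro mult_right_mono) (auto simp: d_def)
      also have "\<dots> \<le> 1/2" using ab0 by (simp add: field_simps)
      finally show ?thesis .
    qed
    have "R \<le> a + norm (resolv u x - resolv u \<nu>)"
      unfolding R_def a_def by (metis add.commute diff_add_cancel norm_triangle_ineq)
    also have "\<dots> \<le> a + r * (R * b * a)" using diff by simp
    also have "r * (R * b * a) = R * (r * (a * b))" by (simp add: algebra_simps)
    also have "\<dots> \<le> R * (1/2)" using rab R0 by (intro mult_left_mono) auto
    finally have "R \<le> 2 * a" by simp
    have "norm (resolv u x - resolv u \<nu>) \<le> r * (R * b * a)" by (rule diff)
    also have "\<dots> \<le> r * ((2 * a) * b * a)"
      using \<open>R \<le> 2 * a\<close> a0 b0 r by (intro mult_left_mono mult_right_mono) auto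
    also have "\<dots> = r * (2 * a * a * b)" by (simp add: algebra_simps)
    also have "\<dots> \<le> d * (2 * a * a * b)" using r ab0 by (intro mult_right_mono) auto
    also have "\<dots> < e"
    proof -
      have "d * (2 * a * a * b) \<le> (e / (2 * a * a * b + 1)) * (2 * a * a * b)"
        using ab0 by (intro mult_right_mono) (auto simp: d_def)
      also have "\<dots> < e" using e ab0 by (simp add: field_simps)
      finally show ?thesis .
    qed
    finally show ?thesis by (simp add: dist_norm)
  qed
  then show "\<exists>d>0. \<forall>x. dist x \<nu> < d \<longrightarrow> dist (resolv u x) (resolv u \<nu>) < e"
    using d0 by blast
qed

lemma resolv_bounded:
  fixes u :: "'a::cbanach_star_algebra"
  assumes inv: "\<And>\<mu>. invertible_el (1 - scaleC \<mu> u)"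
  obtains C where "C > 0" "\<And>\<mu>. cmod \<mu> \<le> M \<Longrightarrow> norm (resolv u \<mu>) \<le> C"
proof -
  have "continuous_on (cball 0 M) (resolv u)"
    using resolv_isCont[OF inv] by (intro continuous_at_imp_continuous_on) auto
  then have "compact (resolv u ` cball 0 M)" by (intro compact_continuous_image) auto
  then have "bounded (resolv u ` cball 0 M)" by (rule compact_imp_bounded)
  then obtain C where "C > 0" "\<forall>y\<in>resolv u ` cball 0 M. norm y \<le> C" unfolding bounded_pos by blast
  then show ?thesis using that[of C] by auto
qed

definition rou :: "nat \<Rightarrow> complex" where
  "rou n = exp (2 * of_real pi * \<i> / of_nat n)"

lemma rou_pow_n: "n > 0 \<Longrightarrow> rou n ^ n = 1"
proof -
  assume n: "n > 0"
  have "rou n ^ n = exp (of_nat n * (2 * of_real pi * \<i> / of_nat n))"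
    unfolding rou_def by (rule exp_of_nat_mult[symmetric])
  also have "of_nat n * (2 * of_real pi * \<i> / of_nat n) = 2 * of_real pi * \<i>"
    using n by simp
  finally show ?thesis by simp
qed

lemma norm_rou_pow [simp]: "cmod (rou n ^ k) = 1"
  by (simp add: rou_def norm_power)

lemma rou_pow_ne_1:
  assumes "0 < m" "m < n"
  shows "rou n ^ m \<noteq> 1"
proof
  assume eq: "rou n ^ m = 1"
  have "rou n ^ m = exp (of_nat m * (2 * of_real pi * \<i> / of_nat n))"
    unfolding rou_def by (rule exp_of_nat_mult[symmetric])
  also have "of_nat m * (2 * of_real pi * \<i> / of_nat n) = \<i> * of_real (2 * pi * m / n)"
    by simp
  finally have "exp (\<i> * of_real (2 * pi * m / n)) = 1" using eq by simp
  then obtain k :: int where k: "2 * pi * m / n = of_int (2 * k) * pi"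
    unfolding exp_eq_1 by auto
  then have e2: "2 * pi * real m / real n = 2 * pi * of_int k" by (simp add: algebra_simps)
  have "real m / real n = (2 * pi * real m / real n) / (2 * pi)" by simp
  also have "\<dots> = of_int k" using e2 by simp
  finally have "real m / real n = of_int k" .
  moreover have "0 < real m / real n" "real m / real n < 1" using assms by auto
  ultimately show False by (metis of_int_0_less_iff of_int_less_1_iff not_le zero_less_iff_neq_zero int_one_le_iff_zero_less)
qed

lemma rou_sum:
  assumes "0 < m" "m < n"
  shows "(\<Sum>k<n. (rou n ^ k) ^ m) = 0"
proof -
  have "(\<Sum>k<n. (rou n ^ k) ^ m) = (\<Sum>k<n. (rou n ^ m) ^ k)"
    by (simp add: power_mult[symmetric] mult.commute)
  also have "\<dots> = ((rou n ^ m) ^ n - 1) / (rou n ^ m - 1)"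
    using rou_pow_ne_1[OF assms] by (rule geometric_sum)
  also have "(rou n ^ m) ^ n = (rou n ^ n) ^ m" by (simp add: power_mult[symmetric] mult.commute)
  also have "\<dots> = 1" using assms by (simp add: rou_pow_n)
  finally show ?thesis by simp
qed

definition ravg :: "'a::cbanach_star_algebra \<Rightarrow> nat \<Rightarrow> complex \<Rightarrow> 'a" where
  "ravg u n \<mu> = scaleR (1 / real n) (\<Sum>k<n. resolv u (rou n ^ k * \<mu>))"

lemma ravg_identity:
  fixes u :: "'a::cbanach_star_algebra"
  assumes inv: "\<And>\<mu>. invertible_el (1 - scaleC \<mu> u)" and n: "n > 0"
  shows "ravg u n \<mu> * (1 - scaleC (\<mu> ^ n) (u ^ n)) = 1"
proof -
  have one: "resolv u (rou n ^ k * \<mu>) * (1 - scaleC (\<mu> ^ n) (u ^ n))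
      = (\<Sum>m<n. scaleC ((rou n ^ k * \<mu>) ^ m) (u ^ m))" for k
  proof -
    let ?v = "rou n ^ k * \<mu>"
    let ?x = "scaleC ?v u"
    have "(rou n ^ k) ^ n = (rou n ^ n) ^ k" by (simp only: power_mult[symmetric] mult.commute)
    then have vn: "?v ^ n = \<mu> ^ n"
      using n by (simp add: power_mult_distrib rou_pow_n)
    have "scaleC (\<mu> ^ n) (u ^ n) = ?x ^ n" by (simp add: scaleC_power vn)
    then have "resolv u ?v * (1 - scaleC (\<mu> ^ n) (u ^ n)) = resolv u ?v * ((1 - ?x) * (\<Sum>m<n. ?x ^ m))"
      by (simp add: one_minus_geom)
    also have "\<dots> = (resolv u ?v * (1 - ?x)) * (\<Sum>m<n. ?x ^ m)" by (simp add: mult.assoc)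
    also have "\<dots> = (\<Sum>m<n. ?x ^ m)" using resolv(1)[OF inv] by simp
    finally show ?thesis by (simp add: scaleC_power)
  qed
  have "(\<Sum>k<n. resolv u (rou n ^ k * \<mu>)) * (1 - scaleC (\<mu> ^ n) (u ^ n))
      = (\<Sum>k<n. \<Sum>m<n. scaleC ((rou n ^ k * \<mu>) ^ m) (u ^ m))"
    by (simp add: sum_distrib_right one)
  also have "\<dots> = (\<Sum>m<n. scaleC (\<Sum>k<n. (rou n ^ k * \<mu>) ^ m) (u ^ m))"
    by (subst sum.swap) (simp add: scaleC_sum_left)
  also have "\<dots> = (\<Sum>m<n. if m = 0 then of_nat n else 0)"
  proof (intro sum.cong refl)
    fix m assume m: "m \<in> {..<n}"
    show "scaleC (\<Sum>k<n. (rou n ^ k * \<mu>) ^ m) (u ^ m) = (if m = 0 then of_nat n else 0)"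
    proof (cases "m = 0")
      case True then show ?thesis by (simp add: scaleC_of_nat)
    next
      case False
      have "(\<Sum>k<n. (rou n ^ k * \<mu>) ^ m) = (\<Sum>k<n. (rou n ^ k) ^ m) * \<mu> ^ m"
        by (simp add: power_mult_distrib sum_distrib_right)
      also have "\<dots> = 0" using rou_sum[of m n] False m by simp
      finally show ?thesis using False by simp
    qed
  qed
  also have "\<dots> = of_nat n" using n by (simp add: sum.delta)
  finally have S: "(\<Sum>k<n. resolv u (rou n ^ k * \<mu>)) * (1 - scaleC (\<mu> ^ n) (u ^ n)) = of_nat n" .
  have "ravg u n \<mu> * (1 - scaleC (\<mu> ^ n) (u ^ n)) = scaleR (1 / real n) ((\<Sum>k<n. resolv u (rou n ^ k * \<mu>)) * (1 - scaleC (\<mu> ^ n) (u ^ n)))"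
    unfolding ravg_def by (simp only: mult_scaleR_left)
  also have "\<dots> = scaleR (1 / real n) (of_nat n)" by (simp only: S)
  also have "\<dots> = 1"
  proof -
    have "(of_nat n :: 'a) = scaleR (real n) 1" by (simp add: scaleR_conv_of_real)
    then show ?thesis using n by simp
  qed
  finally show ?thesis .
qed


lemma ravg_norm:
  fixes u :: "'a::cbanach_star_algebra"
  assumes n: "n > 0" and C: "\<And>\<mu>. cmod \<mu> \<le> M \<Longrightarrow> norm (resolv u \<mu>) \<le> C" and \<mu>: "cmod \<mu> \<le> M"
  shows "norm (ravg u n \<mu>) \<le> C"
proof -
  have "norm (ravg u n \<mu>) = (1 / real n) * norm (\<Sum>k<n. resolv u (rou n ^ k * \<mu>))"
    unfolding ravg_def by simp
  also have "\<dots> \<le> (1 / real n) * (\<Sum>k<n. norm (resolv u (rou n ^ k * \<mu>)))"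
    by (intro mult_left_mono norm_sum) auto
  also have "\<dots> \<le> (1 / real n) * (\<Sum>k<n. C)"
    by (intro mult_left_mono sum_mono C) (auto simp: norm_mult \<mu>)
  also have "\<dots> = C" using n by simp
  finally show ?thesis .
qed

lemma ravg_lip:
  fixes u :: "'a::cbanach_star_algebra"
  assumes inv: "\<And>\<mu>. invertible_el (1 - scaleC \<mu> u)" and n: "n > 0"
    and C: "\<And>\<mu>. cmod \<mu> \<le> M \<Longrightarrow> norm (resolv u \<mu>) \<le> C"
    and \<mu>: "cmod \<mu> \<le> M" and \<nu>: "cmod \<nu> \<le> M"
  shows "norm (ravg u n \<mu> - ravg u n \<nu>) \<le> cmod (\<mu> - \<nu>) * (C * norm u * C)"
proof -
  have C0: "C \<ge> 0" using C[OF \<mu>] norm_ge_zero order.trans by blast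
  have each: "norm (resolv u (rou n ^ k * \<mu>) - resolv u (rou n ^ k * \<nu>)) \<le> cmod (\<mu> - \<nu>) * (C * norm u * C)" for k
  proof -
    have "norm (resolv u (rou n ^ k * \<mu>) - resolv u (rou n ^ k * \<nu>))
        \<le> cmod (rou n ^ k * \<mu> - rou n ^ k * \<nu>) * (norm (resolv u (rou n ^ k * \<mu>)) * norm u * norm (resolv u (rou n ^ k * \<nu>)))"
      by (rule resolv_diff_norm[OF inv inv])
    also have "cmod (rou n ^ k * \<mu> - rou n ^ k * \<nu>) = cmod (\<mu> - \<nu>)"
      by (simp add: right_diff_distrib[symmetric] norm_mult)
    also have "norm (resolv u (rou n ^ k * \<mu>)) * norm u * norm (resolv u (rou n ^ k * \<nu>)) \<le> C * norm u * C"
      using C[of "rou n ^ k * \<mu>"] C[of "rou n ^ k * \<nu>"] \<mu> \<nu> C0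
      by (intro mult_mono) (auto simp: norm_mult)
    finally show ?thesis by (simp add: mult_left_mono)
  qed
  have "ravg u n \<mu> - ravg u n \<nu> = scaleR (1 / real n) (\<Sum>k<n. resolv u (rou n ^ k * \<mu>) - resolv u (rou n ^ k * \<nu>))"
    unfolding ravg_def by (simp add: sum_subtractf scaleR_diff_right)
  then have "norm (ravg u n \<mu> - ravg u n \<nu>) = (1 / real n) * norm (\<Sum>k<n. resolv u (rou n ^ k * \<mu>) - resolv u (rou n ^ k * \<nu>))"
    by simp
  also have "\<dots> \<le> (1 / real n) * (\<Sum>k<n. norm (resolv u (rou n ^ k * \<mu>) - resolv u (rou n ^ k * \<nu>)))"
    by (intro mult_left_mono norm_sum) auto
  also have "\<dots> \<le> (1 / real n) * (\<Sum>k<n. cmod (\<mu> - \<nu>) * (C * norm u * C))"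
    by (intro mult_left_mono sum_mono each) auto
  also have "\<dots> = cmod (\<mu> - \<nu>) * (C * norm u * C)" using n by simp
  finally show ?thesis .
qed

lemma ravg_minus_one:
  fixes u :: "'a::cbanach_star_algebra"
  assumes inv: "\<And>\<mu>. invertible_el (1 - scaleC \<mu> u)" and n: "n > 0"
    and C: "\<And>\<mu>. cmod \<mu> \<le> M \<Longrightarrow> norm (resolv u \<mu>) \<le> C"
    and \<rho>: "0 \<le> \<rho>" "\<rho> \<le> M"
  shows "norm (ravg u n (of_real \<rho>) - 1) \<le> C * (\<rho> ^ n * norm (u ^ n))"
    and "norm (ravg u n (of_real \<rho>) - 1) \<le> 1/2 \<Longrightarrow> \<rho> ^ n * norm (u ^ n) \<le> 1"
proof -
  let ?A = "ravg u n (of_real \<rho>)"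
  let ?x = "scaleC (of_real \<rho> ^ n) (u ^ n)"
  have id: "?A * (1 - ?x) = 1" by (rule ravg_identity[OF inv n])
  have nx: "norm ?x = \<rho> ^ n * norm (u ^ n)"
    using \<rho> by (simp add: norm_scaleC norm_power)
  have "?A - 1 = ?A * ?x"
  proof -
    have "?A - 1 = ?A - ?A * (1 - ?x)" using id by simp
    also have "\<dots> = ?A * ?x" by (simp add: algebra_simps)
    finally show ?thesis .
  qed
  then have "norm (?A - 1) \<le> norm ?A * norm ?x" by (simp add: norm_mult_ineq)
  also have "\<dots> \<le> C * norm ?x"
    using ravg_norm[OF n C, of "of_real \<rho>"] \<rho> by (intro mult_right_mono) auto
  finally show "norm (?A - 1) \<le> C * (\<rho> ^ n * norm (u ^ n))" by (simp add: nx)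
  assume half: "norm (?A - 1) \<le> 1/2"
  have "?x = (?A - 1) * (1 - ?x)"
  proof -
    have "(?A - 1) * (1 - ?x) = ?A * (1 - ?x) - (1 - ?x)" by (simp add: algebra_simps)
    also have "\<dots> = ?x" using id by simp
    finally show ?thesis by simp
  qed
  then have "norm ?x \<le> norm (?A - 1) * norm (1 - ?x)" by (metis norm_mult_ineq)
  also have "\<dots> \<le> 1/2 * (1 + norm ?x)"
  proof (intro mult_mono half)
    show "norm (1 - ?x) \<le> 1 + norm ?x"
      using norm_triangle_ineq4[of 1 ?x] by simp
  qed auto
  finally have "norm ?x \<le> 1" by simp
  then show "\<rho> ^ n * norm (u ^ n) \<le> 1" by (simp add: nx)
qed

lemma qn_power_decay:
  fixes u :: "'a::cbanach_star_algebra"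
  assumes inv: "\<And>\<mu>. invertible_el (1 - scaleC \<mu> u)" and M: "M > 0"
  shows "\<exists>N. \<forall>n\<ge>N. M ^ n * norm (u ^ n) \<le> 1"
proof -
  obtain C where C0: "C > 0" and C: "\<And>\<mu>. cmod \<mu> \<le> M \<Longrightarrow> norm (resolv u \<mu>) \<le> C"
    using resolv_bounded[OF inv] by metis
  define L where "L = C * norm u * C"
  have L0: "L \<ge> 0" using C0 by (simp add: L_def)
  define \<delta> where "\<delta> = 1 / (4 * (L + 1))"
  have \<delta>0: "\<delta> > 0" using L0 by (simp add: \<delta>_def)
  have L\<delta>: "L * \<delta> \<le> 1/4" using L0 by (simp add: \<delta>_def field_simps)
  define good where "good \<rho> \<longleftrightarrow> (\<exists>N. \<forall>n\<ge>N. \<rho> ^ n * norm (u ^ n) \<le> 1)" for \<rho> :: real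
  have step: "good \<rho>1" if g: "good \<rho>" and r: "0 < \<rho>" "\<rho> \<le> \<rho>1" "\<rho>1 \<le> M" "\<rho>1 \<le> \<rho> + \<delta> / 2" for \<rho> \<rho>1
  proof -
    obtain N where N: "\<And>n. n \<ge> N \<Longrightarrow> \<rho> ^ n * norm (u ^ n) \<le> 1" using g unfolding good_def by blast
    define \<rho>' where "\<rho>' = max (\<rho> - \<delta> / 2) (\<rho> / 2)"
    have r': "0 < \<rho>'" "\<rho>' < \<rho>" "\<rho>1 - \<rho>' \<le> \<delta>" "\<rho>' \<le> M"
      using r \<delta>0 by (auto simp: \<rho>'_def)
    define q where "q = \<rho>' / \<rho>"
    have q: "0 < q" "q < 1" using r r' by (auto simp: q_def)
    have "(\<lambda>n. q ^ n) \<longlonglongrightarrow> 0" using q by (intro LIMSEQ_power_zero) auto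
    moreover have "0 < 1 / (4 * C)" using C0 by simp
    ultimately have "eventually (\<lambda>n. q ^ n < 1 / (4 * C)) sequentially"
      by (rule order_tendstoD(2))
    then obtain N2 where N2: "\<And>n. n \<ge> N2 \<Longrightarrow> q ^ n < 1 / (4 * C)"
      unfolding eventually_sequentially by blast
    have "\<rho>1 ^ n * norm (u ^ n) \<le> 1" if n: "n \<ge> max (max N N2) 1" for n
    proof -
      have n0: "n > 0" using n by simp
      have "\<rho>' ^ n * norm (u ^ n) = q ^ n * (\<rho> ^ n * norm (u ^ n))"
        using r by (simp add: q_def power_divide)
      also have "\<dots> \<le> q ^ n * 1" using N[of n] n q by (intro mult_left_mono) auto
      finally have a: "\<rho>' ^ n * norm (u ^ n) \<le> q ^ n" by simp
      have "norm (ravg u n (of_real \<rho>') - 1) \<le> C * (\<rho>' ^ n * norm (u ^ n))"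
        using ravg_minus_one(1)[OF inv n0 C, of \<rho>'] r' by simp
      also have "\<dots> \<le> C * q ^ n" using a C0 by (intro mult_left_mono) auto
      also have "\<dots> \<le> C * (1 / (4 * C))" using N2[of n] n C0 by (intro mult_left_mono) auto
      also have "\<dots> = 1/4" using C0 by simp
      finally have b: "norm (ravg u n (of_real \<rho>') - 1) \<le> 1/4" .
      have "norm (ravg u n (of_real \<rho>1) - ravg u n (of_real \<rho>')) \<le> cmod (of_real \<rho>1 - of_real \<rho>') * L"
        unfolding L_def using r r' by (intro ravg_lip[OF inv n0 C]) auto
      also have "cmod (of_real \<rho>1 - of_real \<rho>') = \<rho>1 - \<rho>'"
        using r r' by (simp add: of_real_diff[symmetric] del: of_real_diff)
      also have "(\<rho>1 - \<rho>') * L \<le> \<delta> * L" using r' L0 by (intro mult_right_mono) auto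
      finally have c: "norm (ravg u n (of_real \<rho>1) - ravg u n (of_real \<rho>')) \<le> 1/4"
        using L\<delta> by (simp add: mult.commute)
      have "norm (ravg u n (of_real \<rho>1) - 1) \<le> norm (ravg u n (of_real \<rho>1) - ravg u n (of_real \<rho>')) + norm (ravg u n (of_real \<rho>') - 1)"
        using norm_triangle_ineq[of "ravg u n (of_real \<rho>1) - ravg u n (of_real \<rho>')" "ravg u n (of_real \<rho>') - 1"]
        by simp
      also have "\<dots> \<le> 1/2" using b c by simp
      finally show ?thesis using ravg_minus_one(2)[OF inv n0 C, of \<rho>1] r by simp
    qed
    then show ?thesis unfolding good_def by blast
  qed
  define \<rho>0 where "\<rho>0 = min M (1 / (norm u + 1))"
  have \<rho>00: "\<rho>0 > 0" using M by (simp add: \<rho>0_def add_nonneg_pos)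
  have base: "good \<rho>0"
  proof -
    have "\<rho>0 ^ n * norm (u ^ n) \<le> 1" for n
    proof -
      have "\<rho>0 ^ n * norm (u ^ n) \<le> \<rho>0 ^ n * norm u ^ n"
        using \<rho>00 by (intro mult_left_mono norm_power_ineq) auto
      also have "\<dots> = (\<rho>0 * norm u) ^ n" by (simp add: power_mult_distrib)
      also have "\<dots> \<le> 1"
      proof (rule power_le_one)
        have "\<rho>0 * norm u \<le> (1 / (norm u + 1)) * norm u"
          by (intro mult_right_mono) (auto simp: \<rho>0_def)
        also have "\<dots> \<le> 1" by (simp add: divide_le_eq_1 add_nonneg_pos)
        finally show "\<rho>0 * norm u \<le> 1" .
      qed (use \<rho>00 in auto)
      finally show ?thesis .
    qed
    then show ?thesis unfolding good_def by blast
  qed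
  have all: "good (min M (\<rho>0 + real k * (\<delta> / 2)))" for k
  proof (induction k)
    case 0
    have "min M \<rho>0 = \<rho>0" by (simp add: \<rho>0_def)
    then show ?case using base by simp
  next
    case (Suc k)
    let ?r = "min M (\<rho>0 + real k * (\<delta> / 2))"
    let ?r1 = "min M (\<rho>0 + real (Suc k) * (\<delta> / 2))"
    have "real k * (\<delta> / 2) \<ge> 0" using \<delta>0 by simp
    then have "?r > 0" using \<rho>00 M by simp
    moreover have "?r \<le> ?r1"
    proof -
      have "real k * (\<delta> / 2) \<le> real (Suc k) * (\<delta> / 2)" using \<delta>0 by (intro mult_right_mono) auto
      then show ?thesis by (intro min.mono) auto
    qed
    moreover have "?r1 \<le> M" by simp
    moreover have "?r1 \<le> ?r + \<delta> / 2" using \<delta>0 by (auto simp: algebra_simps min_def add_divide_distrib)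
    ultimately show ?case using step[OF Suc.IH] by blast
  qed
  obtain k where k: "M < real k * (\<delta> / 2)" using ex_less_of_nat_mult[of "\<delta> / 2" M] \<delta>0 by auto
  have "min M (\<rho>0 + real k * (\<delta> / 2)) = M" using k \<rho>00 by simp
  then have "good M" using all[of k] by simp
  then show ?thesis unfolding good_def .
qed

lemma qn_corner_zero:
  fixes s t E :: "'a::cbanach_star_algebra"
  assumes inv: "\<And>\<mu>. invertible_el (1 - scaleC \<mu> t)"
    and st: "s * t = E" and Et: "E * t = t"
  shows "E = 0"
proof -
  have pw: "s ^ Suc n * t ^ Suc n = E" for n
  proof (induction n)
    case 0 then show ?case using st by simp
  next
    case (Suc n)
    have Etn: "E * t ^ Suc n = t ^ Suc n" using Et by (simp add: mult.assoc[symmetric])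
    have "s ^ Suc (Suc n) * t ^ Suc (Suc n) = s ^ Suc n * (s * t) * t ^ Suc n"
      by (simp only: power_Suc2[of s "Suc n"] power_Suc[of t "Suc n"] mult.assoc)
    also have "\<dots> = s ^ Suc n * t ^ Suc n" using st Etn by (simp add: mult.assoc)
    finally show ?case using Suc by simp
  qed
  define M where "M = 2 * norm s + 1"
  have M0: "M > 0" by (simp add: M_def add_nonneg_pos)
  obtain N where N: "\<And>n. n \<ge> N \<Longrightarrow> M ^ n * norm (t ^ n) \<le> 1"
    using qn_power_decay[OF inv M0] by blast
  have "norm E \<le> 1 * (1/2) ^ n" if n: "n \<ge> max N 1" for n
  proof -
    obtain m where m: "n = Suc m" using n by (cases n) auto
    have "norm E \<le> norm (s ^ n) * norm (t ^ n)" using pw[of m] m by (metis norm_mult_ineq)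
    also have "\<dots> \<le> norm s ^ n * norm (t ^ n)" by (intro mult_right_mono norm_power_ineq) auto
    also have "\<dots> = (norm s / M) ^ n * (M ^ n * norm (t ^ n))"
      using M0 by (simp add: power_divide)
    also have "\<dots> \<le> (norm s / M) ^ n * 1" using N[of n] n M0 by (intro mult_left_mono) auto
    also have "\<dots> \<le> (1/2) ^ n" using M0 by (simp, intro power_mono) (auto simp: M_def field_simps)
    finally show ?thesis by simp
  qed
  then have "norm E \<le> 0" by (intro le_geom_half_imp_nonpos[of "max N 1" _ 1]) auto
  then show ?thesis by simp
qed


section \<open>Neumann series\<close>

lemma neumann:
  fixes w :: "'a::{banach, real_normed_algebra_1}"
  assumes "summable (\<lambda>n. w ^ n)"
  shows "(1 - w) * (\<Sum>n. w ^ n) = 1" "(\<Sum>n. w ^ n) * (1 - w) = 1"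
proof -
  have lim: "(\<lambda>n. w ^ n) \<longlonglongrightarrow> 0" using assms by (rule summable_LIMSEQ_zero)
  have tel: "(\<lambda>n. w ^ n - w ^ Suc n) sums (w ^ 0 - 0)" by (rule telescope_sums'[OF lim])
  have s1: "(\<lambda>n. (1 - w) * w ^ n) sums ((1 - w) * (\<Sum>n. w ^ n))"
    using assms by (intro sums_mult summable_sums)
  have s2: "(\<lambda>n. w ^ n * (1 - w)) sums ((\<Sum>n. w ^ n) * (1 - w))"
    using assms by (intro sums_mult2 summable_sums)
  have e1: "(\<lambda>n. (1 - w) * w ^ n) = (\<lambda>n. w ^ n - w ^ Suc n)"
    by (simp add: algebra_simps)
  have e2: "(\<lambda>n. w ^ n * (1 - w)) = (\<lambda>n. w ^ n - w ^ Suc n)"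
    by (simp add: right_diff_distrib power_commutes)
  show "(1 - w) * (\<Sum>n. w ^ n) = 1" using sums_unique2[OF s1[unfolded e1] tel] by simp
  show "(\<Sum>n. w ^ n) * (1 - w) = 1" using sums_unique2[OF s2[unfolded e2] tel] by simp
qed

lemma decK_quasinilpotent:
  fixes u :: "'a::cbanach_star_algebra"
  assumes "decK (\<lambda>n. u ^ n)"
  shows "quasinilpotent u"
  unfolding quasinilpotent_def
proof (intro allI impI)
  fix l :: complex assume l: "l \<noteq> 0"
  define w where "w = scaleC (inverse l) u"
  have "summable (\<lambda>n. w ^ n)"
  proof (rule decK_summable[OF assms, of "inverse (cmod l)" _ 1])
    show "norm (w ^ n) \<le> inverse (cmod l) ^ n * norm (u ^ n) * 1" for n
      by (simp add: w_def scaleC_power norm_scaleC norm_power norm_inverse)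
  qed auto
  note nm = neumann[OF this]
  define S where "S = (\<Sum>n. w ^ n)"
  have eq: "scaleC l 1 - u = scaleC l (1 - w)"
    using l by (simp add: w_def scaleC_diff_right scaleC_scaleC scaleC_one)
  have "scaleC (inverse l) S * (scaleC l 1 - u) = 1"
    unfolding eq using l nm(2)
    by (simp add: scaleC_mult_left scaleC_mult_right scaleC_scaleC scaleC_one S_def)
  moreover have "(scaleC l 1 - u) * scaleC (inverse l) S = 1"
    unfolding eq using l nm(1)
    by (simp add: scaleC_mult_left scaleC_mult_right scaleC_scaleC scaleC_one S_def)
  ultimately show "invertible_el (scaleC l 1 - u)" unfolding invertible_el_def by blast
qed

lemma range_equiv:
  fixes p q b :: "'a::ring_1"
  assumes "p * q = q" "q * p = p"
  shows "(1 - p) * b = 0 \<longleftrightarrow> (1 - q) * b = 0"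
proof
  assume "(1 - p) * b = 0"
  then have b: "b = p * b" by (simp add: algebra_simps)
  have "(1 - q) * b = (1 - q) * (p * b)" using b by simp
  also have "\<dots> = (p - q * p) * b" by (simp add: algebra_simps)
  finally show "(1 - q) * b = 0" using assms by simp
next
  assume "(1 - q) * b = 0"
  then have b: "b = q * b" by (simp add: algebra_simps)
  have "(1 - p) * b = (1 - p) * (q * b)" using b by simp
  also have "\<dots> = (q - p * q) * b" by (simp add: algebra_simps)
  finally show "(1 - p) * b = 0" using assms by simp
qed

lemma assoc_rule: "(a::'a::semigroup_mult) * b = c \<Longrightarrow> a * (b * z) = c * z"
  by (simp add: mult.assoc[symmetric])

lemma block_power:
  fixes U N :: "'a::ring_1"
  assumes "U * U = 0" "N * U = 0"
  shows "(U + N) ^ Suc n = U * N ^ n + N ^ Suc n"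
proof (induction n)
  case 0 then show ?case by simp
next
  case (Suc n)
  have "(U + N) ^ Suc (Suc n) = (U + N) * (U * N ^ n + N ^ Suc n)"
    using Suc by (simp only: power_Suc)
  also have "\<dots> = (U * U) * N ^ n + U * N ^ Suc n + (N * U) * N ^ n + N * N ^ Suc n"
    by (simp add: algebra_simps)
  also have "\<dots> = U * N ^ Suc n + N ^ Suc (Suc n)" using assms by simp
  finally show ?case .
qed

lemma block_gdrazin:
  fixes c A B N h X f :: "'a::ring_1"
  assumes cABN: "c = A + B + N"
    and ff: "f * f = f" and fA: "f * A = A" and Af: "A * f = A" and fB: "f * B = B" and Bf: "B * f = 0"
    and fN: "f * N = 0" and Nf: "N * f = 0" and fh: "f * h = h" and hf: "h * f = h"
    and fX: "f * X = X" and Xf: "X * f = 0" and Ah: "A * h = f" and hA: "h * A = f"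
    and AX: "A * X = h * B + X * N"
  shows "c * (h + X) = f + A * X" "(h + X) * c = f + A * X"
    "(h + X) * c * (h + X) = h + X"
    "c - c * c * (h + X) = (B - A * A * X) + N"
    "(B - A * A * X) * (B - A * A * X) = 0" "N * (B - A * A * X) = 0"
    "(f + A * X) * f = f" "f * (f + A * X) = f + A * X"
proof -
  have Bh: "B * h = 0" by (metis fh Bf assoc_rule mult_zero_left)
  have BX: "B * X = 0" by (metis fX Bf assoc_rule mult_zero_left)
  have Nh: "N * h = 0" by (metis fh Nf assoc_rule mult_zero_left)
  have NX: "N * X = 0" by (metis fX Nf assoc_rule mult_zero_left)
  have hN: "h * N = 0" by (metis hf fN assoc_rule mult_zero_right mult.assoc)
  have XA: "X * A = 0" by (metis fA Xf assoc_rule mult_zero_left mult.assoc)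
  have XB: "X * B = 0" by (metis fB Xf assoc_rule mult_zero_left mult.assoc)
  have Xh: "X * h = 0" by (metis fh Xf assoc_rule mult_zero_left mult.assoc)
  have XX: "X * X = 0" by (metis fX Xf assoc_rule mult_zero_left mult.assoc)
  have BA: "B * A = 0" by (metis fA Bf assoc_rule mult_zero_left)
  have NA: "N * A = 0" by (metis fA Nf assoc_rule mult_zero_left)
  have fAX: "f * (A * X) = A * X" by (metis fA mult.assoc)
  have AXf: "A * X * f = 0" by (simp add: mult.assoc Xf)
  have AXh: "A * X * h = 0" by (simp add: mult.assoc Xh)
  have AXX: "A * X * X = 0" by (simp add: mult.assoc XX)
  show cy: "c * (h + X) = f + A * X"
    unfolding cABN by (simp add: distrib_left distrib_right Ah Bh BX Nh NX)
  show yc: "(h + X) * c = f + A * X"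
    unfolding cABN by (simp add: distrib_left distrib_right hA hN XA XB AX)
  show "(h + X) * c * (h + X) = h + X"
    unfolding yc by (simp add: distrib_left distrib_right fh fX AXh AXX)
  have "c * c * (h + X) = c * (f + A * X)" using cy by (simp add: mult.assoc)
  also have "\<dots> = A + A * A * X"
    unfolding cABN by (simp add: distrib_left distrib_right Af Bf Nf mult.assoc[symmetric] BA NA)
  finally show "c - c * c * (h + X) = (B - A * A * X) + N"
    by (simp add: cABN)
  have UB: "(B - A * A * X) * f = 0" by (simp add: left_diff_distrib Bf mult.assoc Xf)
  have fU: "f * (B - A * A * X) = B - A * A * X"
    by (simp add: right_diff_distrib fB mult.assoc[symmetric] fA)
  show "(B - A * A * X) * (B - A * A * X) = 0"
    by (metis UB fU assoc_rule mult_zero_left)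
  show "N * (B - A * A * X) = 0"
    by (metis fU Nf assoc_rule mult_zero_left)
  show "(f + A * X) * f = f" by (simp add: distrib_right ff AXf)
  show "f * (f + A * X) = f + A * X" by (simp add: distrib_left ff fAX)
qed


section \<open>Uniqueness of the generalized Drazin inverse\<close>

lemma commute_inverse:
  fixes m a r :: "'a::ring_1"
  assumes "m * a = a * m" "r * m = 1" "m * r = 1"
  shows "r * a = a * r"
proof -
  have "r * a = r * a * (m * r)" using assms(3) by simp
  also have "\<dots> = r * (a * m) * r" by (simp add: mult.assoc)
  also have "\<dots> = r * (m * a) * r" using assms(1) by simp
  also have "\<dots> = (r * m) * a * r" by (simp add: mult.assoc)
  finally show ?thesis using assms(2) by simp
qed

lemma kill_left:
  fixes u X z :: "'a::cbanach_star_algebra"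
  assumes dec: "decK (\<lambda>n. u ^ n)" and X: "X = u * X * z"
  shows "X = 0"
proof -
  have pw: "X = u ^ n * X * z ^ n" for n
  proof (induction n)
    case 0 then show ?case by simp
  next
    case (Suc n)
    have "X = u * X * z" by (rule X)
    also have "\<dots> = u * (u ^ n * X * z ^ n) * z" using Suc by simp
    also have "\<dots> = u ^ Suc n * X * z ^ Suc n" by (simp add: mult.assoc power_Suc2 power_commutes)
    finally show ?case .
  qed
  show ?thesis
  proof (rule decK_kill[OF dec, of "norm z" "norm X" 0])
    show "norm X \<le> norm (u ^ n) * norm z ^ n * norm X" for n
    proof -
      have "norm X = norm (u ^ n * X * z ^ n)" using pw[of n] by simp
      also have "\<dots> \<le> norm (u ^ n) * norm X * norm (z ^ n)" by (rule norm_mult3)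
      also have "\<dots> \<le> norm (u ^ n) * norm X * norm z ^ n"
        by (intro mult_left_mono norm_power_ineq) auto
      finally show ?thesis by (simp add: algebra_simps)
    qed
  qed auto
qed

lemma kill_right:
  fixes u X z :: "'a::cbanach_star_algebra"
  assumes dec: "decK (\<lambda>n. u ^ n)" and X: "X = z * X * u"
  shows "X = 0"
proof -
  have pw: "X = z ^ n * X * u ^ n" for n
  proof (induction n)
    case 0 then show ?case by simp
  next
    case (Suc n)
    have "X = z * X * u" by (rule X)
    also have "\<dots> = z * (z ^ n * X * u ^ n) * u" using Suc by simp
    also have "\<dots> = z ^ Suc n * X * u ^ Suc n" by (simp add: mult.assoc power_Suc2 power_commutes)
    finally show ?case .
  qed
  show ?thesis
  proof (rule decK_kill[OF dec, of "norm z" "norm X" 0])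
    show "norm X \<le> norm (u ^ n) * norm z ^ n * norm X" for n
    proof -
      have "norm X = norm (z ^ n * X * u ^ n)" using pw[of n] by simp
      also have "\<dots> \<le> norm (z ^ n) * norm X * norm (u ^ n)" by (rule norm_mult3)
      also have "\<dots> \<le> norm z ^ n * norm X * norm (u ^ n)"
        by (intro mult_right_mono norm_power_ineq) auto
      finally show ?thesis by (simp add: algebra_simps)
    qed
  qed auto
qed

lemma gdrazin_commute:
  fixes c y d :: "'a::cbanach_star_algebra"
  assumes y: "is_gdrazin c y" and dec: "decK (\<lambda>n. (c - c * c * y) ^ n)"
    and dc: "d * c = c * d"
  shows "d * (c * y) = (c * y) * d" "d * y = y * d"
proof -
  have ycy: "y * c * y = y" and cy: "c * y = y * c" using y unfolding is_gdrazin_def by auto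
  define e where "e = c * y"
  define p where "p = 1 - e"
  have ey: "e * y = y" using ycy cy by (simp add: e_def)
  have ye: "y * e = y" using ycy by (simp add: e_def mult.assoc)
  have ee: "e * e = e" using ye by (simp add: e_def mult.assoc)
  have ec: "e * c = c * e" by (simp add: e_def mult.assoc cy[symmetric])
  have yc: "y * c = e" using cy by (simp add: e_def)
  have pp: "p * p = p" using ee by (simp add: p_def algebra_simps)
  have pc: "p * c = c * p" using ec by (simp add: p_def algebra_simps)
  have pe: "p * e = 0" "e * p = 0" using ee by (simp_all add: p_def algebra_simps)
  have u: "c - c * c * y = c * p" by (simp add: p_def e_def algebra_simps mult.assoc)
  have dec': "decK (\<lambda>n. (c * p) ^ n)" using dec unfolding u .
  have L: "p * d * e = 0"
  proof (rule kill_left[OF dec', of _ y])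
    have "c * p * (p * d * e) * y = c * (p * p) * d * (e * y)" by (simp add: mult.assoc)
    also have "\<dots> = (p * c) * d * y" using pp pc ey by simp
    also have "\<dots> = p * (d * c) * y" using dc by (simp add: mult.assoc)
    also have "\<dots> = p * d * e" by (simp add: mult.assoc e_def)
    finally show "p * d * e = c * p * (p * d * e) * y" by simp
  qed
  have R: "e * d * p = 0"
  proof (rule kill_right[OF dec', of _ y])
    have "y * (e * d * p) * (c * p) = (y * e) * d * (p * c) * p" by (simp add: mult.assoc)
    also have "\<dots> = y * d * c * (p * p)" using ye pc by (simp add: mult.assoc)
    also have "\<dots> = y * (d * c) * p" using pp by (simp add: mult.assoc)
    also have "\<dots> = (y * c) * d * p" using dc by (simp add: mult.assoc)
    also have "\<dots> = e * d * p" using yc by simp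
    finally show "e * d * p = y * (e * d * p) * (c * p)" by simp
  qed
  have "d * e = (e + p) * d * e" by (simp add: p_def)
  also have "\<dots> = e * d * e" using L by (simp add: distrib_right)
  also have "\<dots> = e * d * (e + p)" using R by (simp add: distrib_left mult.assoc)
  also have "\<dots> = e * d" by (simp add: p_def)
  finally have de: "d * e = e * d" .
  then show "d * (c * y) = (c * y) * d" by (simp add: e_def)
  have "y * d = y * e * d" using ye by simp
  also have "\<dots> = y * d * e" using de by (simp add: mult.assoc)
  also have "\<dots> = y * d * c * y" by (simp add: e_def mult.assoc)
  also have "\<dots> = y * c * d * y" using dc by (simp add: mult.assoc)
  also have "\<dots> = e * d * y" using yc by simp
  also have "\<dots> = d * e * y" using de by simp
  also have "\<dots> = d * y" using ey by (simp add: mult.assoc)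
  finally show "d * y = y * d" by simp
qed


lemma gdrazin_unique:
  fixes c y z :: "'a::cbanach_star_algebra"
  assumes y: "is_gdrazin c y" and dec: "decK (\<lambda>n. (c - c * c * y) ^ n)"
    and z: "is_gdrazin c z"
  shows "z = y"
proof -
  have ycy: "y * c * y = y" and cy: "c * y = y * c" using y unfolding is_gdrazin_def by auto
  have zcz: "z * c * z = z" and cz: "c * z = z * c" and qz: "quasinilpotent (c - c * c * z)"
    using z unfolding is_gdrazin_def by auto
  define e where "e = c * y"
  define f where "f = c * z"
  define p where "p = 1 - e"
  have ey: "e * y = y" using ycy cy by (simp add: e_def)
  have ye: "y * e = y" using ycy by (simp add: e_def mult.assoc)
  have ee: "e * e = e" using ye by (simp add: e_def mult.assoc)
  have yc: "y * c = e" using cy by (simp add: e_def)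
  have fz: "f * z = z" using zcz cz by (simp add: f_def)
  have zf: "z * f = z" using zcz by (simp add: f_def mult.assoc)
  have ff: "f * f = f" using zf by (simp add: f_def mult.assoc)
  have fc: "f * c = c * f" by (simp add: f_def mult.assoc cz[symmetric])
  have zc: "z * c = c * z" using cz by simp
  have fe: "f * e = e * f" and fy: "f * y = y * f"
    using gdrazin_commute[OF y dec fc] by (simp_all add: e_def)
  have zy: "z * y = y * z" using gdrazin_commute[OF y dec zc] by simp
  have ec: "e * c = c * e" by (simp add: e_def mult.assoc cy[symmetric])
  have pp: "p * p = p" using ee by (simp add: p_def algebra_simps)
  have pc: "p * c = c * p" using ec by (simp add: p_def algebra_simps)
  have u: "c - c * c * y = c * p" by (simp add: p_def e_def algebra_simps mult.assoc)
  have dec': "decK (\<lambda>n. (c * p) ^ n)" using dec unfolding u .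
  have pf: "p * f = 0"
  proof (rule kill_left[OF dec', of _ z])
    have "c * p * (p * f) * z = c * (p * p) * (f * z)" by (simp add: mult.assoc)
    also have "\<dots> = (p * c) * z" using pp pc fz by simp
    also have "\<dots> = p * f" by (simp add: mult.assoc f_def)
    finally show "p * f = c * p * (p * f) * z" by simp
  qed
  have ef: "e * f = f" using pf by (simp add: p_def algebra_simps)
  have fe': "f * e = f" using fe ef by simp
  define E where "E = e - f"
  have EE: "E * E = E" using ee ef fe' ff by (simp add: E_def algebra_simps)
  have eE: "e * E = E" using ee ef by (simp add: E_def algebra_simps)
  have fE: "f * E = 0" using fe' ff by (simp add: E_def algebra_simps)
  have yE: "y * E = E * y" using fy ye ey by (simp add: E_def algebra_simps)
  have cE: "c * E = E * c" using ec fc by (simp add: E_def algebra_simps)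
  define t where "t = y * E"
  define s where "s = c * E"
  have st: "s * t = E"
  proof -
    have "s * t = c * (E * y) * E" by (simp add: s_def t_def mult.assoc)
    also have "\<dots> = (c * y) * (E * E)" by (simp add: mult.assoc yE[symmetric])
    also have "\<dots> = E" using EE eE by (simp add: e_def)
    finally show ?thesis .
  qed
  have Et: "E * t = t" using yE EE by (simp add: t_def mult.assoc[symmetric])
  have tE: "t * E = t" using EE by (simp add: t_def mult.assoc)
  have ts: "t * s = E"
  proof -
    have "t * s = y * (E * c) * E" by (simp add: s_def t_def mult.assoc)
    also have "\<dots> = y * (c * E) * E" using cE by simp
    also have "\<dots> = (y * c) * (E * E)" by (simp add: mult.assoc)
    also have "\<dots> = E" using EE eE yc by simp
    finally show ?thesis .
  qed
  have Es: "E * s = s" using cE EE by (simp add: s_def mult.assoc[symmetric])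
  have tc: "t * c = c * t"
  proof -
    have "t * c = y * (E * c)" by (simp add: t_def mult.assoc)
    also have "\<dots> = (y * c) * E" using cE by (simp add: mult.assoc)
    also have "\<dots> = (c * y) * E" using cy by simp
    also have "\<dots> = c * t" by (simp add: t_def mult.assoc)
    finally show ?thesis .
  qed
  have tf: "t * f = f * t"
  proof -
    have "t * f = y * (f * E)" using fE E_def ef ff by (simp add: t_def E_def algebra_simps)
    moreover have "f * t = y * (f * E)" using fy by (simp add: t_def mult.assoc[symmetric])
    ultimately show ?thesis by simp
  qed
  have tEc: "t * E = E * t" using tE Et by simp
  have ts': "t * s = s * t" using ts st by simp
  have inv: "invertible_el (1 - scaleC \<mu> t)" for \<mu>
  proof (cases "\<mu> = 0")
    case True
    then show ?thesis unfolding invertible_el_def by (intro exI[of _ 1]) simp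
  next
    case False
    define m where "m = scaleC \<mu> 1 - (c - c * c * z)"
    obtain r where rm: "r * m = 1" and mr: "m * r = 1"
      using qz False unfolding quasinilpotent_def invertible_el_def m_def by blast
    have q': "c - c * c * z = c - c * f" by (simp add: f_def mult.assoc)
    have m1: "m * t = scaleC \<mu> t - c * t + c * (f * t)"
      unfolding m_def q' by (simp add: algebra_simps scaleC_one_mult)
    have m2: "t * m = scaleC \<mu> t - t * c + t * c * f"
      unfolding m_def q' by (simp add: algebra_simps mult_scaleC_one)
    have "c * (f * t) = t * c * f"
    proof -
      have "c * (f * t) = c * (t * f)" using tf by simp
      also have "\<dots> = (c * t) * f" by (simp add: mult.assoc)
      also have "\<dots> = t * c * f" using tc by simp
      finally show ?thesis .
    qed
    then have mt: "m * t = t * m" using m1 m2 tc by simp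
    have rt: "r * t = t * r" using commute_inverse[OF mt rm mr] by simp
    have qE: "(c - c * f) * E = s" using fE by (simp add: s_def algebra_simps mult.assoc)
    have mE: "m * E = scaleC \<mu> E - s"
      unfolding m_def q' using qE by (simp add: left_diff_distrib scaleC_one_mult)
    define W where "W = (1 - E) - r * E * s"
    have right: "(1 - scaleC \<mu> t) * W = 1"
    proof -
      have a: "t * (1 - E) = 0" using tE by (simp add: algebra_simps)
      have b: "t * (r * E * s) = r * E"
      proof -
        have "t * (r * E * s) = (t * r) * (E * s)" by (simp add: mult.assoc)
        also have "\<dots> = (r * t) * (E * s)" using rt by simp
        also have "\<dots> = r * (t * E) * s" by (simp add: mult.assoc)
        also have "\<dots> = r * E * (t * s)" using tEc by (simp add: mult.assoc)
        also have "\<dots> = r * E" using ts EE by (simp add: mult.assoc)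
        finally show ?thesis .
      qed
      have "(1 - scaleC \<mu> t) * W = (1 - E) - r * E * s - scaleC \<mu> (t * (1 - E)) + scaleC \<mu> (t * (r * E * s))"
        by (simp add: W_def algebra_simps scaleC_mult_left scaleC_diff_right)
      also have "\<dots> = (1 - E) - r * (E * s - scaleC \<mu> E)"
        using a b by (simp add: algebra_simps scaleC_mult_right mult.assoc)
      also have "E * s - scaleC \<mu> E = - (m * E)" using Es mE by simp
      also have "r * (- (m * E)) = - E" using rm by (simp add: mult.assoc[symmetric])
      finally show ?thesis by simp
    qed
    have Wt: "W * t = t * W"
    proof -
      have b1: "t * (r * E * s) = r * E"
      proof -
        have "t * (r * E * s) = (t * r) * (E * s)" by (simp add: mult.assoc)
        also have "\<dots> = (r * t) * (E * s)" using rt by simp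
        also have "\<dots> = r * (t * E) * s" by (simp add: mult.assoc)
        also have "\<dots> = r * E * (t * s)" using tEc by (simp add: mult.assoc)
        also have "\<dots> = r * E" using ts EE by (simp add: mult.assoc)
        finally show ?thesis .
      qed
      have b2: "r * E * s * t = r * E" using st EE by (simp add: mult.assoc)
      have "t * (r * E * s) = r * E * s * t" using b1 b2 by simp
      then show ?thesis using tEc by (simp add: W_def algebra_simps)
    qed
    have left: "W * (1 - scaleC \<mu> t) = 1"
    proof -
      have "W * (1 - scaleC \<mu> t) = (1 - scaleC \<mu> t) * W"
        using Wt by (simp add: algebra_simps scaleC_mult_left scaleC_mult_right)
      then show ?thesis using right by simp
    qed
    show ?thesis unfolding invertible_el_def using left right by blast
  qed
  have "E = 0" by (rule qn_corner_zero[OF inv st Et])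
  then have ef2: "e = f" by (simp add: E_def)
  have "y = y * e" using ye by simp
  also have "\<dots> = y * c * z" using ef2 by (simp add: f_def mult.assoc)
  also have "\<dots> = z" using yc ef2 fz by simp
  finally show ?thesis by simp
qed


section \<open>Existence of the generalized Drazin inverse from core data\<close>

lemma gdrazin_from_core:
  fixes c g :: "'a::cbanach_star_algebra"
  assumes gcg: "g * c * g = g" and cgg: "c * g * g = g" and fP: "g * c * (c * g) = c * g"
    and dec: "decK (\<lambda>n. (1 - g * c) * c ^ Suc n)"
  shows "\<exists>y. is_gdrazin c y \<and> decK (\<lambda>n. (c - c * c * y) ^ n) \<and> c * y * (g * c) = g * c \<and> g * c * (c * y) = c * y"
proof -
  define f where "f = g * c"
  define h where "h = g * f"
  define A where "A = c * f"
  define B where "B = f * c * (1 - f)"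
  define N where "N = (1 - f) * c * (1 - f)"
  have fg: "f * g = g" using gcg by (simp add: f_def)
  have ff: "f * f = f" using fg by (simp add: f_def mult.assoc[symmetric])
  have fh: "f * h = h" using fg by (simp add: h_def mult.assoc[symmetric])
  have hf: "h * f = h" using ff by (simp add: h_def mult.assoc)
  have cf: "f * c * f = c * f"
  proof -
    have "f * c * f = (g * c * (c * g)) * c" by (simp add: f_def mult.assoc)
    also have "\<dots> = c * f" using fP by (simp add: f_def mult.assoc)
    finally show ?thesis .
  qed
  have fA: "f * A = A" using cf by (simp add: A_def mult.assoc)
  have Af: "A * f = A" using ff by (simp add: A_def mult.assoc)
  have fB: "f * B = B" using ff by (simp add: B_def mult.assoc[symmetric])
  have f1: "f * (1 - f) = 0" using ff by (simp add: algebra_simps)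
  have f2: "(1 - f) * f = 0" using ff by (simp add: algebra_simps)
  have Bf: "B * f = 0"
  proof -
    have "B * f = f * c * ((1 - f) * f)" by (simp add: B_def mult.assoc)
    then show ?thesis using f2 by simp
  qed
  have fN: "f * N = 0"
  proof -
    have "f * N = (f * (1 - f)) * c * (1 - f)" by (simp add: N_def mult.assoc)
    then show ?thesis using f1 by simp
  qed
  have Nf: "N * f = 0"
  proof -
    have "N * f = (1 - f) * c * ((1 - f) * f)" by (simp add: N_def mult.assoc)
    then show ?thesis using f2 by simp
  qed
  have Ah: "A * h = f"
  proof -
    have "A * h = c * (f * g) * f" by (simp add: A_def h_def mult.assoc)
    also have "\<dots> = (c * g) * (g * c)" using fg by (simp add: f_def mult.assoc)
    also have "\<dots> = f" using cgg by (simp add: f_def mult.assoc[symmetric])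
    finally show ?thesis .
  qed
  have hA: "h * A = f"
  proof -
    have "h * A = g * (f * c * f)" by (simp add: A_def h_def mult.assoc)
    also have "\<dots> = g * (c * f)" using cf by simp
    also have "\<dots> = f * f" by (simp add: f_def mult.assoc)
    finally show ?thesis using ff by simp
  qed
  have cABN: "c = A + B + N" by (simp add: A_def B_def N_def algebra_simps)
  have fcf0: "(1 - f) * c * f = 0" using cf by (simp add: algebra_simps)
  have N1: "(1 - f) * c * (1 - f) = (1 - f) * c" using fcf0 by (simp add: algebra_simps)
  have NSuc: "N ^ Suc n = (1 - f) * c ^ Suc n * (1 - f)" for n
  proof (induction n)
    case 0 then show ?case by (simp add: N_def)
  next
    case (Suc n)
    have "N ^ Suc (Suc n) = N * N ^ Suc n" by (simp only: power_Suc)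
    also have "\<dots> = (1 - f) * c * (1 - f) * ((1 - f) * c ^ Suc n * (1 - f))" using Suc by (simp add: N_def)
    also have "\<dots> = ((1 - f) * c * ((1 - f) * (1 - f))) * c ^ Suc n * (1 - f)" by (simp add: mult.assoc)
    also have "(1 - f) * (1 - f) = 1 - f" using ff by (simp add: algebra_simps)
    also have "(1 - f) * c * (1 - f) = (1 - f) * c" by (rule N1)
    also have "(1 - f) * c * c ^ Suc n * (1 - f) = (1 - f) * c ^ Suc (Suc n) * (1 - f)"
      by (simp add: mult.assoc)
    finally show ?case .
  qed
  have dN: "decK (\<lambda>n. N ^ n)"
  proof (rule decK_unSuc, rule decK_mono[OF dec, of "norm (1 - f)"])
    show "norm (N ^ Suc n) \<le> norm (1 - f) * norm ((1 - g * c) * c ^ Suc n)" for n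
    proof -
      have "norm (N ^ Suc n) \<le> norm ((1 - g * c) * c ^ Suc n) * norm (1 - g * c)"
        unfolding NSuc f_def by (rule norm_mult_ineq)
      then show ?thesis by (simp add: mult.commute f_def)
    qed
  qed simp
  define T where "T n = h ^ Suc (Suc n) * B * N ^ n" for n
  have sT: "summable T"
  proof (rule decK_summable[OF dN, of "norm h" _ "norm h ^ 2 * norm B"])
    show "norm (T n) \<le> norm h ^ n * norm (N ^ n) * (norm h ^ 2 * norm B)" for n
    proof -
      have "norm (T n) \<le> norm (h ^ Suc (Suc n)) * norm B * norm (N ^ n)"
        unfolding T_def by (rule norm_mult3)
      also have "\<dots> \<le> norm h ^ Suc (Suc n) * norm B * norm (N ^ n)"
        by (intro mult_right_mono norm_power_ineq) auto
      also have "\<dots> = norm h ^ n * norm (N ^ n) * (norm h ^ 2 * norm B)"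
        by (simp add: power2_eq_square algebra_simps)
      finally show ?thesis .
    qed
  qed auto
  define X where "X = suminf T"
  have fhp: "f * h ^ Suc m = h ^ Suc m" for m using fh by (simp add: mult.assoc[symmetric])
  have fX: "f * X = X"
  proof -
    have "f * X = (\<Sum>n. f * T n)" unfolding X_def by (rule suminf_mult[OF sT, symmetric])
    also have "(\<lambda>n. f * T n) = T" by (rule ext) (simp only: T_def mult.assoc[symmetric] fhp)
    finally show ?thesis by (simp add: X_def)
  qed
  have BNf: "B * N ^ n * f = 0" for n
  proof (cases n)
    case 0 then show ?thesis using Bf by simp
  next
    case (Suc m)
    have "B * N ^ n * f = B * N ^ m * (N * f)" by (simp only: Suc power_Suc2 mult.assoc)
    then show ?thesis using Nf by simp
  qed
  have Xf: "X * f = 0"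
  proof -
    have "X * f = (\<Sum>n. T n * f)" unfolding X_def by (rule suminf_mult2[OF sT])
    also have "(\<lambda>n. T n * f) = (\<lambda>n. 0)" by (rule ext) (simp add: T_def mult.assoc BNf[simplified mult.assoc])
    finally show ?thesis by simp
  qed
  define a where "a n = h ^ Suc n * B * N ^ n" for n
  have AT: "(\<lambda>n. A * T n) = a"
  proof
    fix n
    have "A * T n = (A * h) * h ^ Suc n * B * N ^ n" by (simp add: T_def mult.assoc)
    also have "\<dots> = a n" using Ah fhp by (simp add: a_def mult.assoc)
    finally show "A * T n = a n" .
  qed
  have TN: "(\<lambda>n. T n * N) = (\<lambda>n. a (Suc n))"
    by (rule ext) (simp add: T_def a_def mult.assoc power_commutes)
  have sa: "summable a" using summable_mult[OF sT, of A] unfolding AT .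
  have AX: "A * X = h * B + X * N"
  proof -
    have "A * X = suminf a" unfolding X_def using suminf_mult[OF sT, of A] AT by simp
    moreover have "X * N = (\<Sum>n. a (Suc n))" unfolding X_def using suminf_mult2[OF sT, of N] TN by simp
    moreover have "(\<Sum>n. a (Suc n)) = suminf a - a 0" by (rule suminf_split_head[OF sa])
    moreover have "a 0 = h * B" by (simp add: a_def)
    ultimately show ?thesis by simp
  qed
  note blk = block_gdrazin[OF cABN ff fA Af fB Bf fN Nf fh hf fX Xf Ah hA AX]
  define y where "y = h + X"
  define U where "U = B - A * A * X"
  have uu: "c - c * c * y = U + N" using blk(4) by (simp add: y_def U_def)
  have pw: "(c - c * c * y) ^ Suc n = U * N ^ n + N ^ Suc n" for n
    unfolding uu using block_power[of U N n] blk(5,6) by (simp add: U_def)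
  have decu: "decK (\<lambda>n. (c - c * c * y) ^ n)"
  proof (rule decK_unSuc, rule decK_add[OF decK_mono[OF dN, of "norm U"] decK_Suc[OF dN]])
    show "norm ((c - c * c * y) ^ Suc n) \<le> norm (U * N ^ n) + norm (N ^ Suc n)" for n
      unfolding pw by (rule norm_triangle_ineq)
    show "norm (U * N ^ n) \<le> norm U * norm (N ^ n)" for n by (rule norm_mult_ineq)
  qed simp
  have "is_gdrazin c y"
    unfolding is_gdrazin_def
    using blk(1,2,3) decK_quasinilpotent[OF decu] by (simp add: y_def)
  moreover have "c * y * (g * c) = g * c" using blk(1,7) by (simp add: y_def f_def)
  moreover have "g * c * (c * y) = c * y" using blk(1,8) by (simp add: y_def f_def)
  ultimately show ?thesis using decu by blast
qed


section \<open>Weighted generalized core-EP inverse\<close>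

lemma w_aw_pow: "(w::'a::ring_1) * (a * w) ^ n = (w * a) ^ n * w"
proof (induction n)
  case 0 then show ?case by simp
next
  case (Suc n)
  have "w * (a * w) ^ Suc n = (w * a) * (w * (a * w) ^ n)" by (simp add: mult.assoc)
  also have "\<dots> = (w * a) ^ Suc n * w" using Suc by (simp add: mult.assoc)
  finally show ?case .
qed

lemma g_pow:
  fixes c g :: "'a::ring_1"
  assumes "c * g * g = g"
  shows "g = c ^ Suc n * g ^ Suc (Suc n)"
proof (induction n)
  case 0 then show ?case using assms by (simp add: mult.assoc)
next
  case (Suc n)
  have "c ^ Suc (Suc n) * g ^ Suc (Suc (Suc n)) = c ^ Suc n * (c * g * g) * g ^ Suc n"
    by (simp only: power_Suc2[of c "Suc n"] power_Suc[of g "Suc (Suc n)"] power_Suc[of g "Suc n"] mult.assoc)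
  also have "\<dots> = c ^ Suc n * g ^ Suc (Suc n)" using assms by (simp add: mult.assoc)
  finally show ?case using Suc by simp
qed

lemma wgcEP_core:
  fixes a w x :: "'a::cbanach_star_algebra"
  assumes "is_wgcEP a w x"
  shows "(w * a) * (w * x) * (w * x) = w * x"
    and "decK (\<lambda>n. (1 - (w * x) * (w * a)) * (w * a) ^ Suc n)"
    and "(w * x) * (w * a) * (w * x) = w * x"
    and "(w * x) * (w * a) * ((w * a) * (w * x)) = (w * a) * (w * x)"
proof -
  define c where "c = w * a"
  define g where "g = w * x"
  have x: "a * (w * x) ^ 2 = x" and lim: "(\<lambda>n. root n (norm ((a * w) ^ n - (x * w) * (a * w) ^ (Suc n)))) \<longlonglongrightarrow> 0"
    using assms unfolding is_wgcEP_def by auto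
  have cgg: "c * g * g = g"
  proof -
    have "c * g * g = w * (a * (w * x) ^ 2)" by (simp add: c_def g_def power2_eq_square mult.assoc)
    then show ?thesis using x by (simp add: g_def)
  qed
  then show "(w * a) * (w * x) * (w * x) = w * x" by (simp add: c_def g_def)
  define H where "H n = (a * w) ^ n - (x * w) * (a * w) ^ (Suc n)" for n
  have dH: "decK H" unfolding H_def by (rule decK_root[OF lim])
  have HH: "w * H n * a = (1 - g * c) * c ^ Suc n" for n
  proof -
    have wn: "w * (a * w) ^ m * a = c ^ Suc m" for m
    proof -
      have "w * (a * w) ^ m * a = (w * a) ^ m * w * a" by (simp only: w_aw_pow)
      also have "\<dots> = c ^ Suc m" by (simp only: c_def power_Suc2 mult.assoc)
      finally show ?thesis .
    qed
    have e1: "w * (a * w) ^ n * a = c ^ Suc n" by (rule wn)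
    have e2: "w * (x * w * (a * w) ^ Suc n) * a = g * c * c ^ Suc n"
    proof -
      have "w * (x * w * (a * w) ^ Suc n) * a = (w * x) * (w * (a * w) ^ Suc n * a)" by (simp add: mult.assoc)
      also have "w * (a * w) ^ Suc n * a = c ^ Suc (Suc n)" by (rule wn)
      finally show ?thesis by (simp add: g_def mult.assoc)
    qed
    show ?thesis unfolding H_def using e1 e2 by (simp add: algebra_simps)
  qed
  have dec: "decK (\<lambda>n. (1 - g * c) * c ^ Suc n)"
  proof (rule decK_mono[OF dH, of "norm w * norm a"])
    show "norm ((1 - g * c) * c ^ Suc n) \<le> norm w * norm a * norm (H n)" for n
    proof -
      have "norm ((1 - g * c) * c ^ Suc n) = norm (w * H n * a)" by (simp only: HH)
      also have "\<dots> \<le> norm w * norm (H n) * norm a" by (rule norm_mult3)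
      finally show ?thesis by (simp add: algebra_simps)
    qed
  qed simp
  then show "decK (\<lambda>n. (1 - (w * x) * (w * a)) * (w * a) ^ Suc n)" by (simp add: c_def g_def)
  have "(1 - g * c) * g = 0"
  proof (rule decK_kill[OF dec, of "norm g" "norm g ^ 2" 0])
    show "norm ((1 - g * c) * g) \<le> norm ((1 - g * c) * c ^ Suc n) * norm g ^ n * norm g ^ 2" for n
    proof -
      have "(1 - g * c) * g = (1 - g * c) * c ^ Suc n * g ^ Suc (Suc n)"
        using g_pow[OF cgg, of n] by (simp add: mult.assoc)
      then have "norm ((1 - g * c) * g) \<le> norm ((1 - g * c) * c ^ Suc n) * norm (g ^ Suc (Suc n))"
        by (simp add: norm_mult_ineq)
      also have "\<dots> \<le> norm ((1 - g * c) * c ^ Suc n) * norm g ^ Suc (Suc n)"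
        by (intro mult_left_mono norm_power_ineq) auto
      finally show ?thesis by (simp add: power2_eq_square algebra_simps)
    qed
  qed auto
  then have gcg: "g * c * g = g" by (simp add: algebra_simps)
  then show "(w * x) * (w * a) * (w * x) = w * x" by (simp add: c_def g_def)
  have "(1 - g * c) * (c * g) = 0"
  proof (rule decK_kill[OF dec, of "norm g" "norm c * norm g ^ 2" 0])
    show "norm ((1 - g * c) * (c * g)) \<le> norm ((1 - g * c) * c ^ Suc n) * norm g ^ n * (norm c * norm g ^ 2)" for n
    proof -
      have "c * g = c * (c ^ Suc n * g ^ Suc (Suc n))" using g_pow[OF cgg, of n] by simp
      also have "\<dots> = c ^ Suc n * (c * g ^ Suc (Suc n))" by (simp only: mult.assoc[symmetric] power_commutes[symmetric])
      finally have "(1 - g * c) * (c * g) = ((1 - g * c) * c ^ Suc n) * c * g ^ Suc (Suc n)"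
        by (simp add: mult.assoc)
      then have "norm ((1 - g * c) * (c * g)) \<le> norm ((1 - g * c) * c ^ Suc n) * norm c * norm (g ^ Suc (Suc n))"
        by (simp add: norm_mult3)
      also have "\<dots> \<le> norm ((1 - g * c) * c ^ Suc n) * norm c * norm g ^ Suc (Suc n)"
        by (intro mult_left_mono norm_power_ineq) auto
      finally show ?thesis by (simp add: power2_eq_square algebra_simps)
    qed
  qed auto
  then have "g * c * (c * g) = c * g" by (simp add: algebra_simps)
  then show "(w * x) * (w * a) * ((w * a) * (w * x)) = (w * a) * (w * x)" by (simp add: c_def g_def)
qed


lemma wgcEP_range:
  fixes a w x1 x2 :: "'a::cbanach_star_algebra"
  assumes x1: "is_wgcEP a w x1" and x2: "is_wgcEP a w x2"
  shows "(w * x1) * (w * a) * ((w * x2) * (w * a)) = (w * x2) * (w * a)"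
proof -
  define c where "c = w * a"
  define g1 where "g1 = w * x1"
  define g2 where "g2 = w * x2"
  note k1 = wgcEP_core[OF x1, folded c_def g1_def]
  note k2 = wgcEP_core[OF x2, folded c_def g2_def]
  have "(1 - g1 * c) * (g2 * c) = 0"
  proof (rule decK_kill[OF k1(2), of "norm g2" "norm g2 ^ 2 * norm c" 0])
    show "norm ((1 - g1 * c) * (g2 * c)) \<le> norm ((1 - g1 * c) * c ^ Suc n) * norm g2 ^ n * (norm g2 ^ 2 * norm c)" for n
    proof -
      have "(1 - g1 * c) * (g2 * c) = ((1 - g1 * c) * c ^ Suc n) * g2 ^ Suc (Suc n) * c"
        using g_pow[OF k2(1), of n] by (metis mult.assoc)
      then have "norm ((1 - g1 * c) * (g2 * c)) \<le> norm ((1 - g1 * c) * c ^ Suc n) * norm (g2 ^ Suc (Suc n)) * norm c"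
        by (simp add: norm_mult3)
      also have "\<dots> \<le> norm ((1 - g1 * c) * c ^ Suc n) * norm g2 ^ Suc (Suc n) * norm c"
        by (intro mult_right_mono mult_left_mono norm_power_ineq) auto
      finally show ?thesis by (simp add: power2_eq_square algebra_simps)
    qed
  qed auto
  then show ?thesis by (simp add: algebra_simps c_def g1_def g2_def)
qed

lemma wgcEP_unique:
  fixes a w x1 x2 :: "'a::cbanach_star_algebra"
  assumes x1: "is_wgcEP a w x1" and x2: "is_wgcEP a w x2"
  shows "x1 = x2"
proof -
  define c where "c = w * a"
  define g1 where "g1 = w * x1"
  define g2 where "g2 = w * x2"
  note k1 = wgcEP_core[OF x1, folded c_def g1_def]
  note k2 = wgcEP_core[OF x2, folded c_def g2_def]
  have r12: "g1 * c * (g2 * c) = g2 * c" using wgcEP_range[OF x1 x2] by (simp add: c_def g1_def g2_def)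
  have r21: "g2 * c * (g1 * c) = g1 * c" using wgcEP_range[OF x2 x1] by (simp add: c_def g1_def g2_def)
  have sa1: "invol (c * g1) = c * g1" using x1 unfolding is_wgcEP_def by (simp add: c_def g1_def mult.assoc)
  have sa2: "invol (c * g2) = c * g2" using x2 unfolding is_wgcEP_def by (simp add: c_def g2_def mult.assoc)
  have Pf1: "c * g1 * (g1 * c) = g1 * c" using k1(1) by (simp add: mult.assoc[symmetric])
  have Pf2: "c * g2 * (g2 * c) = g2 * c" using k2(1) by (simp add: mult.assoc[symmetric])
  have P12: "c * g1 * (c * g2) = c * g2"
  proof -
    have "c * g1 * (c * g2) = c * g1 * (g2 * c * (c * g2))" using k2(4) by simp
    also have "\<dots> = c * g1 * (g1 * c * (g2 * c)) * (c * g2)" using r12 by (simp add: mult.assoc)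
    also have "\<dots> = (c * g1 * (g1 * c)) * (g2 * c) * (c * g2)" by (simp add: mult.assoc)
    also have "\<dots> = g1 * c * (g2 * c) * (c * g2)" using Pf1 by simp
    also have "\<dots> = g2 * c * (c * g2)" using r12 by simp
    also have "\<dots> = c * g2" using k2(4) by simp
    finally show ?thesis .
  qed
  have P21: "c * g2 * (c * g1) = c * g1"
  proof -
    have "c * g2 * (c * g1) = c * g2 * (g1 * c * (c * g1))" using k1(4) by simp
    also have "\<dots> = c * g2 * (g2 * c * (g1 * c)) * (c * g1)" using r21 by (simp add: mult.assoc)
    also have "\<dots> = (c * g2 * (g2 * c)) * (g1 * c) * (c * g1)" by (simp add: mult.assoc)
    also have "\<dots> = g2 * c * (g1 * c) * (c * g1)" using Pf2 by simp
    also have "\<dots> = g1 * c * (c * g1)" using r21 by simp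
    also have "\<dots> = c * g1" using k1(4) by simp
    finally show ?thesis .
  qed
  have PP: "c * g2 = c * g1"
  proof -
    have "c * g2 = invol (c * g2)" using sa2 by simp
    also have "\<dots> = invol (c * g1 * (c * g2))" using P12 by simp
    also have "\<dots> = invol (c * g2) * invol (c * g1)" by (rule invol_mult)
    also have "\<dots> = c * g2 * (c * g1)" using sa1 sa2 by simp
    also have "\<dots> = c * g1" by (rule P21)
    finally show ?thesis .
  qed
  have "g1 = g1 * (c * g1)" using k1(3) by (simp add: mult.assoc)
  also have "\<dots> = g1 * (c * g2)" using PP by simp
  also have "\<dots> = (g1 * c) * (g2 * c) * g2" using k2(3) by (simp add: mult.assoc)
  also have "\<dots> = g2 * c * g2" using r12 by simp
  also have "\<dots> = g2" using k2(3) by simp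
  finally have gg: "g1 = g2" .
  have "x1 = a * (w * x1) ^ 2" using x1 unfolding is_wgcEP_def by simp
  also have "\<dots> = a * (w * x2) ^ 2" using gg by (simp add: g1_def g2_def)
  also have "\<dots> = x2" using x2 unfolding is_wgcEP_def by simp
  finally show ?thesis .
qed

theorem lemma4p6:
  fixes a w b :: "'a::cbanach_star_algebra"
  assumes "\<exists>x. is_wgcEP a w x"
  shows "((1 - w * a * w * wgcEP a w) * b = 0 \<longleftrightarrow> (1 - w * wgcEP a w * w * a) * b = 0)
       \<and> ((1 - w * wgcEP a w * w * a) * b = 0 \<longleftrightarrow> spectral_idem (w * a) * b = 0)"
proof -
  obtain x0 where x0: "is_wgcEP a w x0" using assms by blast
  have xe: "wgcEP a w = x0"
    unfolding wgcEP_def using x0 by (rule the_equality) (rule wgcEP_unique[OF _ x0])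
  define x where "x = wgcEP a w"
  have x: "is_wgcEP a w x" using x0 xe by (simp add: x_def)
  define c where "c = w * a"
  define g where "g = w * x"
  note k = wgcEP_core[OF x, folded c_def g_def]
  obtain y where y: "is_gdrazin c y" and decy: "decK (\<lambda>n. (c - c * c * y) ^ n)"
    and e1: "c * y * (g * c) = g * c" and e2: "g * c * (c * y) = c * y"
    using gdrazin_from_core[OF k(3) k(1) k(4) k(2)] by blast
  have gd: "gdrazin c = y"
    unfolding gdrazin_def using y by (rule the_equality) (rule gdrazin_unique[OF y decy])
  have si: "spectral_idem (w * a) = 1 - c * y" by (simp add: spectral_idem_def gd c_def[symmetric])
  have l1: "w * a * w * wgcEP a w = c * g" by (simp add: c_def g_def x_def mult.assoc)
  have l2: "w * wgcEP a w * w * a = g * c" by (simp add: c_def g_def x_def mult.assoc)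
  have Pf: "c * g * (g * c) = g * c" using k(1) by (simp add: mult.assoc[symmetric])
  have A: "(1 - c * g) * b = 0 \<longleftrightarrow> (1 - g * c) * b = 0"
    by (rule range_equiv[OF Pf k(4)])
  have B: "(1 - g * c) * b = 0 \<longleftrightarrow> (1 - c * y) * b = 0"
    by (rule range_equiv[OF e2 e1])
  show ?thesis unfolding l1 l2 si using A B by simp
qed

end
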